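(* Let $\mathcal{A}$ be a probabilistic automaton with state set $Q$. Its Markov monoid is consistent with $\mathcal{A}$: for every limit-word $\mathbf{u}$ in the Markov monoid of $\mathcal{A}$ there exists a sequence of words $(u_n)_{n\in\mathbb{N}}$ which reifies $\mathbf{u}$, i.e. for all states $s,t\in Q$ the sequence $(\mathbb{P}_{\mathcal{A}}(s\xrightarrow{u_n}t))_{n}$ converges and $\mathbf{u}(s,t)=1 \iff \lim_n \mathbb{P}_{\mathcal{A}}(s\xrightarrow{u_n}t)>0$.
   Context: Fix a finite alphabet $A$. A probabilistic automaton is $\mathcal{A}=(Q,q_0,\Delta,F)$ with $Q$ finite, $q_0\in Q$, $F\subseteq Q$ and $\Delta: Q\times A\to\mathcal{D}(Q)$ ($\mathcal{D}(Q)$ the probability distributions on $Q$). For $a\in A$ let $M_a(s,t)=\Delta(s,a)(t)$, for $u=a_0\cdots a_{n-1}$ let $M_u=M_{a_0}\cdots M_{a_{n-1}}$ (identity for the empty word), and $\mathbb{P}_{\mathcal{A}}(s\xrightarrow{u}t)=M_u(s,t)$. A limit-word is a map $\mathbf{u}:Q\times Q\to\{0,1\}$ such that for every $s$ there is $t$ with $\mathbf{u}(s,t)=1$. The concatenation $\mathbf{u}\cdot\mathbf{v}$ is given by $(\mathbf{u}\cdot\mathbf{v})(s,t)=1$ iff there exists $q$ with $\mathbf{u}(s,q)=1$ and $\mathbf{v}(q,t)=1$. A limit-word $\mathbf{u}$ is idempotent if $\mathbf{u}\cdot\mathbf{u}=\mathbf{u}$; for idempotent $\mathbf{u}$, a state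 $s$ is $\mathbf{u}$-recurrent if for all $t$, $\mathbf{u}(s,t)=1$ implies $\mathbf{u}(t,s)=1$, and the iteration $\mathbf{u}^\sharp$ is defined by $\mathbf{u}^\sharp(s,t)=1$ iff $\mathbf{u}(s,t)=1$ and $t$ is $\mathbf{u}$-recurrent. For $a\in A$, the limit-word $\mathbf{a}$ is given by $\mathbf{a}(s,t)=1$ iff $\Delta(s,a)(t)>0$, and $\mathbf{1}$ is the identity limit-word ($\mathbf{1}(s,t)=1$ iff $s=t$). The Markov monoid of $\mathcal{A}$ is the smallest set of limit-words containing $\{\mathbf{a}\mid a\in A\}\cup\{\mathbf{1}\}$ and closed under concatenation and under iteration of idempotent elements. *)

theory Defs
  imports "HOL-Probability.Probability"
begin

text \<open>Transition function of a probabilistic automaton: Delta s a is the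
distribution of successor states. States 'q finite, letters 'a finite.
Initial state and final states play no role in the statement.\<close>

text \<open>P(s --u--> t) = M_u(s,t), M_u = M_a0 ... M_a(n-1).\<close>
fun word_prob :: "('q::finite \<Rightarrow> 'a \<Rightarrow> 'q pmf) \<Rightarrow> 'a list \<Rightarrow> 'q \<Rightarrow> 'q \<Rightarrow> real" where
  "word_prob Delta [] s t = (if s = t then 1 else 0)"
| "word_prob Delta (a # u) s t = (\<Sum>q\<in>UNIV. pmf (Delta s a) q * word_prob Delta u q t)"

type_synonym 'q limit_word = "'q \<Rightarrow> 'q \<Rightarrow> bool"

definition is_limit_word :: "'q limit_word \<Rightarrow> bool" where
  "is_limit_word u \<longleftrightarrow> (\<forall>s. \<exists>t. u s t)"

definition lw_concat :: "'q limit_word \<Rightarrow> 'q limit_word \<Rightarrow> 'q limit_word" where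
  "lw_concat u v = (\<lambda>s t. \<exists>q. u s q \<and> v q t)"

definition lw_idempotent :: "'q limit_word \<Rightarrow> bool" where
  "lw_idempotent u \<longleftrightarrow> lw_concat u u = u"

definition lw_recurrent :: "'q limit_word \<Rightarrow> 'q \<Rightarrow> bool" where
  "lw_recurrent u s \<longleftrightarrow> (\<forall>t. u s t \<longrightarrow> u t s)"

definition lw_iter :: "'q limit_word \<Rightarrow> 'q limit_word" where
  "lw_iter u = (\<lambda>s t. u s t \<and> lw_recurrent u t)"

definition letter_lw :: "('q \<Rightarrow> 'a \<Rightarrow> 'q pmf) \<Rightarrow> 'a \<Rightarrow> 'q limit_word" where
  "letter_lw Delta a = (\<lambda>s t. pmf (Delta s a) t > 0)"

definition lw_one :: "'q limit_word" where
  "lw_one = (\<lambda>s t. s = t)"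

inductive_set markov_monoid :: "('q \<Rightarrow> 'a \<Rightarrow> 'q pmf) \<Rightarrow> 'q limit_word set"
  for Delta where
  letter: "letter_lw Delta a \<in> markov_monoid Delta"
| one: "lw_one \<in> markov_monoid Delta"
| concat: "u \<in> markov_monoid Delta \<Longrightarrow> v \<in> markov_monoid Delta \<Longrightarrow> lw_concat u v \<in> markov_monoid Delta"
| iter: "u \<in> markov_monoid Delta \<Longrightarrow> lw_idempotent u \<Longrightarrow> lw_iter u \<in> markov_monoid Delta"

definition reifies :: "('q::finite \<Rightarrow> 'a \<Rightarrow> 'q pmf) \<Rightarrow> (nat \<Rightarrow> 'a list) \<Rightarrow> 'q limit_word \<Rightarrow> bool" where
  "reifies Delta us u \<longleftrightarrow> (\<forall>s t. convergent (\<lambda>n. word_prob Delta (us n) s t) \<and>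
       (u s t \<longleftrightarrow> lim (\<lambda>n. word_prob Delta (us n) s t) > 0))"

end

theory Submission imports Defs begin

definition mmul :: "('q::finite \<Rightarrow> 'q \<Rightarrow> real) \<Rightarrow> ('q \<Rightarrow> 'q \<Rightarrow> real) \<Rightarrow> 'q \<Rightarrow> 'q \<Rightarrow> real" where
  "mmul A B = (\<lambda>s t. \<Sum>q\<in>UNIV. A s q * B q t)"

fun mpow :: "('q::finite \<Rightarrow> 'q \<Rightarrow> real) \<Rightarrow> nat \<Rightarrow> 'q \<Rightarrow> 'q \<Rightarrow> real" where
  "mpow M 0 = (\<lambda>s t. if s = t then 1 else 0)"
| "mpow M (Suc k) = mmul M (mpow M k)"

lemma if10_mult: "(if P then 1 else 0) * (x::real) = (if P then x else 0)" by simp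
lemma if10_mult': "(x::real) * (if P then 1 else 0) = (if P then x else 0)" by simp

lemma swap_mult: "(\<Sum>q\<in>UNIV. f q * (\<Sum>r\<in>UNIV. g q r * h r)) = (\<Sum>r\<in>UNIV. (\<Sum>q\<in>UNIV. f q * g q r) * (h r::real))"
  by (simp add: sum_distrib_left sum_distrib_right mult.assoc) (rule sum.swap)

lemma mmul_assoc: "mmul (mmul A B) C = mmul A (mmul B C)"
  unfolding mmul_def by (intro ext) (rule swap_mult[symmetric])

lemma mmul_id_left: "mmul (\<lambda>s t. if s = t then 1 else 0) B = B"
  unfolding mmul_def by (auto intro!: ext simp: if10_mult if10_mult')

lemma mmul_id_right: "mmul B (\<lambda>s t. if s = t then 1 else 0) = B"
  unfolding mmul_def by (auto intro!: ext simp: if10_mult if10_mult')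

lemma mpow_Suc': "mpow M (Suc k) = mmul (mpow M k) M"
proof (induction k)
  case 0 then show ?case by (simp add: mmul_id_left mmul_id_right)
next
  case (Suc k)
  have "mpow M (Suc (Suc k)) = mmul M (mmul (mpow M k) M)" using Suc by simp
  also have "\<dots> = mmul (mpow M (Suc k)) M" by (simp add: mmul_assoc)
  finally show ?case .
qed

lemma word_prob_append: "word_prob Delta (u @ v) s t = mmul (word_prob Delta u) (word_prob Delta v) s t"
proof (induction u arbitrary: s)
  case Nil then show ?case by (simp add: mmul_def if10_mult)
next
  case (Cons a u)
  have "word_prob Delta ((a # u) @ v) s t = (\<Sum>q\<in>UNIV. pmf (Delta s a) q * (\<Sum>r\<in>UNIV. word_prob Delta u q r * word_prob Delta v r t))"
    using Cons by (simp add: mmul_def)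
  also have "\<dots> = (\<Sum>r\<in>UNIV. (\<Sum>q\<in>UNIV. pmf (Delta s a) q * word_prob Delta u q r) * word_prob Delta v r t)"
    by (rule swap_mult)
  finally show ?case by (simp add: mmul_def)
qed

lemma word_prob_pow: "word_prob Delta (concat (replicate k w)) = mpow (word_prob Delta w) k"
  by (induction k) (auto intro!: ext simp: word_prob_append)

lemma word_prob_single: "word_prob Delta [a] s t = pmf (Delta s a) t"
  by (simp add: if_distrib cong: if_cong)

lemma word_prob_nonneg: "word_prob Delta u s t \<ge> 0"
  by (induction u arbitrary: s) (auto intro!: sum_nonneg)

lemma word_prob_rows: "(\<Sum>t\<in>UNIV. word_prob Delta u s t) = 1"
proof (induction u arbitrary: s)
  case Nil then show ?case by simp
next
  case (Cons a u)
  have "(\<Sum>t\<in>UNIV. word_prob Delta (a # u) s t) = (\<Sum>q\<in>UNIV. pmf (Delta s a) q * (\<Sum>t\<in>UNIV. word_prob Delta u q t))"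
    by (simp add: sum_distrib_left) (rule sum.swap)
  also have "\<dots> = 1" using Cons by (simp add: sum_pmf_eq_1)
  finally show ?case .
qed

lemma mpow_tendsto:
  assumes "\<And>s t. (\<lambda>n. A n s t) \<longlonglongrightarrow> L s t"
  shows "(\<lambda>n. mpow (A n) k s t) \<longlonglongrightarrow> mpow L k s t"
proof (induction k arbitrary: s t)
  case 0 then show ?case by simp
next
  case (Suc k) then show ?case
    by (simp add: mmul_def, intro tendsto_sum tendsto_mult assms) auto
qed


lemma pos_sum_ex: "0 < (\<Sum>q\<in>A. f q) \<Longrightarrow> \<exists>q\<in>A. 0 < (f q::real)"
proof (rule ccontr)
  assume "0 < (\<Sum>q\<in>A. f q)" "\<not> (\<exists>q\<in>A. 0 < f q)"
  then have "(\<Sum>q\<in>A. f q) \<le> 0" by (intro sum_nonpos) (simp add: not_less)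
  then show False using \<open>0 < (\<Sum>q\<in>A. f q)\<close> by simp
qed

context
  fixes L :: "'q::finite \<Rightarrow> 'q \<Rightarrow> real" and u :: "'q limit_word"
  assumes nonneg: "\<And>s t. L s t \<ge> 0"
    and rows: "\<And>s. (\<Sum>t\<in>UNIV. L s t) = 1"
    and supp: "\<And>s t. u s t \<longleftrightarrow> L s t > 0"
    and idem: "lw_idempotent u"
begin

lemma utrans: "u s q \<Longrightarrow> u q t \<Longrightarrow> u s t"
proof -
  assume "u s q" "u q t"
  then have "lw_concat u u s t" unfolding lw_concat_def by blast
  then show "u s t" using idem unfolding lw_idempotent_def by simp
qed

lemma usucc: "\<exists>t. u s t"
proof -
  obtain t where "0 < L s t" using pos_sum_ex[of "L s" UNIV] rows[of s] by auto
  then show ?thesis using supp by blast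
qed

lemma mp_nonneg: "mpow L k s t \<ge> 0"
  by (induction k arbitrary: s t) (auto simp: mmul_def nonneg intro!: sum_nonneg)

lemma mp_rows: "(\<Sum>t\<in>UNIV. mpow L k s t) = 1"
proof (induction k arbitrary: s)
  case 0 then show ?case by simp
next
  case (Suc k)
  have "(\<Sum>t\<in>UNIV. mpow L (Suc k) s t) = (\<Sum>q\<in>UNIV. L s q * (\<Sum>t\<in>UNIV. mpow L k q t))"
    by (simp add: mmul_def sum_distrib_left) (rule sum.swap)
  then show ?case using Suc rows by simp
qed

lemma mp_le1: "mpow L k s t \<le> 1"
proof -
  have "mpow L k s t \<le> (\<Sum>t\<in>UNIV. mpow L k s t)"
    by (rule member_le_sum) (auto simp: mp_nonneg)
  then show ?thesis using mp_rows by simp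
qed

lemma mp_supp: "0 < mpow L (Suc k) s t \<Longrightarrow> u s t"
proof (induction k arbitrary: s)
  case 0
  then show ?case using supp by (simp add: mmul_def if10_mult')
next
  case (Suc k)
  have "0 < (\<Sum>q\<in>UNIV. L s q * mpow L (Suc k) q t)"
    using Suc.prems by (subst (asm) mpow.simps(2)) (simp only: mmul_def)
  then obtain q where "0 < L s q * mpow L (Suc k) q t"
    using pos_sum_ex by blast
  then have "0 < L s q" "0 < mpow L (Suc k) q t"
    using nonneg[of s q] mp_nonneg[of "Suc k" q t] by (auto simp: zero_less_mult_iff)
  then show ?case using Suc.IH supp utrans by blast
qed

lemma rec_closed: "lw_recurrent u r \<Longrightarrow> u r t \<Longrightarrow> lw_recurrent u t"
  unfolding lw_recurrent_def using utrans by blast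

lemma rec_self: "lw_recurrent u r \<Longrightarrow> u r r"
  unfolding lw_recurrent_def using usucc utrans by blast

lemma exists_rec: "\<exists>r. u s r \<and> lw_recurrent u r"
proof -
  define S where "S = (\<lambda>t. insert t {x. u t x})"
  obtain t0 where "u s t0" using usucc by blast
  obtain t where t: "u s t" and tmin: "\<And>y. u s y \<Longrightarrow> card (S t) \<le> card (S y)"
    using ex_has_least_nat[of "u s" t0 "\<lambda>t. card (S t)"] \<open>u s t0\<close> by blast
  have "lw_recurrent u t"
    unfolding lw_recurrent_def
  proof (intro allI impI, rule ccontr)
    fix x assume ux: "u t x" and nx: "\<not> u x t"
    have sub: "S x \<subseteq> S t" using ux utrans unfolding S_def by blast
    have "t \<notin> S x" using ux nx unfolding S_def by auto
    then have "S x \<subset> S t" using sub unfolding S_def by blast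
    then have "card (S x) < card (S t)" by (simp add: psubset_card_mono)
    moreover have "u s x" using t ux utrans by blast
    ultimately show False using tmin by fastforce
  qed
  then show ?thesis using t by blast
qed

definition "dl = Min {L s t |s t. u s t}"

lemma dl_fin: "finite {L s t |s t. u s t}"
proof -
  have "{L s t |s t. u s t} \<subseteq> (\<lambda>p. L (fst p) (snd p)) ` UNIV"
  proof clarify
    fix s t show "L s t \<in> (\<lambda>p. L (fst p) (snd p)) ` UNIV"
      by (rule image_eqI[of _ _ "(s,t)"]) auto
  qed
  then show ?thesis by (rule finite_subset) simp
qed

lemma dl_le: "u s t \<Longrightarrow> dl \<le> L s t"
  unfolding dl_def using dl_fin by (intro Min_le) auto

lemma dl_in: "\<exists>s t. u s t \<and> dl = L s t"
proof -
  obtain t where "u undefined t" using usucc by blast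
  then have "{L s t |s t. u s t} \<noteq> {}" by auto
  from Min_in[OF dl_fin this] show ?thesis unfolding dl_def by blast
qed

lemma dl_pos: "0 < dl" using dl_in supp by auto

lemma L_le1: "L s t \<le> 1"
proof -
  have "L s t \<le> (\<Sum>t\<in>UNIV. L s t)"
    by (rule member_le_sum) (auto simp: nonneg)
  then show ?thesis using rows by simp
qed

lemma dl_le1: "dl \<le> 1" using dl_in L_le1 by metis

lemma trans_mass_zero:
  assumes "lw_recurrent u q" "\<not> lw_recurrent u t"
  shows "mpow L k q t = 0"
proof (cases k)
  case 0 then show ?thesis using assms by auto
next
  case (Suc m)
  have "\<not> 0 < mpow L k q t" using mp_supp assms rec_closed Suc by blast
  then show ?thesis using mp_nonneg[of k q t] by linarith
qed

lemma trans_mass: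
  "(\<Sum>t\<in>{t. \<not> lw_recurrent u t}. mpow L k s t) \<le> (1 - dl) ^ k"
proof (induction k arbitrary: s)
  case 0
  have "(\<Sum>t\<in>{t. \<not> lw_recurrent u t}. mpow L 0 s t) \<le> (\<Sum>t\<in>UNIV. mpow L 0 s t)"
    by (rule sum_mono2) (auto simp: mp_nonneg)
  then show ?case using mp_rows[of 0 s] by simp
next
  case (Suc k)
  let ?T = "{t. \<not> lw_recurrent u t}"
  let ?tau = "\<lambda>q. \<Sum>t\<in>?T. mpow L k q t"
  obtain r where r: "u s r" "lw_recurrent u r" using exists_rec by blast
  have tr: "?tau r = 0" using trans_mass_zero[OF r(2)] by simp
  have "(\<Sum>t\<in>?T. mpow L (Suc k) s t) = (\<Sum>q\<in>UNIV. L s q * ?tau q)"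
    by (simp add: mmul_def sum_distrib_left) (rule sum.swap)
  also have "\<dots> = L s r * ?tau r + (\<Sum>q\<in>UNIV - {r}. L s q * ?tau q)"
    by (simp add: sum.remove)
  also have "\<dots> = (\<Sum>q\<in>UNIV - {r}. L s q * ?tau q)" using tr by simp
  also have "\<dots> \<le> (\<Sum>q\<in>UNIV - {r}. L s q * (1 - dl) ^ k)"
    by (intro sum_mono mult_left_mono Suc.IH nonneg)
  also have "\<dots> = (\<Sum>q\<in>UNIV - {r}. L s q) * (1 - dl) ^ k"
    by (simp add: sum_distrib_right)
  also have "(\<Sum>q\<in>UNIV - {r}. L s q) = 1 - L s r"
    using rows[of s] sum.remove[of UNIV r "L s"] by simp
  also have "(1 - L s r) * (1 - dl) ^ k \<le> (1 - dl) * (1 - dl) ^ k"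
    using dl_le[OF r(1)] dl_le1 by (intro mult_right_mono) auto
  finally show ?case by simp
qed

lemma trans_tendsto:
  assumes "\<not> lw_recurrent u t"
  shows "(\<lambda>k. mpow L k s t) \<longlonglongrightarrow> 0"
proof (rule Lim_null_comparison)
  show "\<forall>\<^sub>F k in sequentially. norm (mpow L k s t) \<le> (1 - dl) ^ k"
  proof (intro always_eventually allI)
    fix k
    have "mpow L k s t \<le> (\<Sum>t\<in>{t. \<not> lw_recurrent u t}. mpow L k s t)"
      by (rule member_le_sum) (auto simp: mp_nonneg assms)
    then show "norm (mpow L k s t) \<le> (1 - dl) ^ k"
      using trans_mass[of k s] mp_nonneg[of k s t] by simp
  qed
  show "(\<lambda>k. (1 - dl) ^ k) \<longlonglongrightarrow> 0"
    using dl_pos dl_le1 by (intro LIMSEQ_power_zero) auto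
qed

lemma rec_lower:
  assumes "lw_recurrent u t" "u t x"
  shows "dl \<le> mpow L (Suc k) x t"
proof -
  have "mpow L (Suc k) x t = (\<Sum>y\<in>UNIV. mpow L k x y * L y t)"
    by (simp only: mpow_Suc') (simp add: mmul_def)
  also have "\<dots> \<ge> (\<Sum>y\<in>UNIV. mpow L k x y * dl)"
  proof (rule sum_mono)
    fix y
    show "mpow L k x y * dl \<le> mpow L k x y * L y t"
    proof (cases "0 < mpow L k x y")
      case True
      have "u t y"
      proof (cases k)
        case 0 then show ?thesis using True assms by (auto split: if_splits)
      next
        case (Suc m) then show ?thesis using True mp_supp assms utrans by blast
      qed
      then have "u y t" using assms unfolding lw_recurrent_def by blast
      then show ?thesis using dl_le True by (intro mult_left_mono) auto
    next
      case False
      then have "mpow L k x y = 0" using mp_nonneg[of k x y] by linarith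
      then show ?thesis by simp
    qed
  qed
  also have "(\<Sum>y\<in>UNIV. mpow L k x y * dl) = dl"
    using mp_rows[of k x] by (simp add: sum_distrib_right[symmetric])
  finally show ?thesis .
qed

lemma rec_lower2:
  assumes "lw_recurrent u t" "u s t" "k \<ge> 1"
  shows "dl * dl \<le> mpow L k s t"
proof -
  obtain m where k: "k = Suc m" using assms(3) by (cases k) auto
  show ?thesis
  proof (cases m)
    case 0
    have "mpow L k s t = L s t" using k 0 by (simp add: mmul_def if10_mult')
    then show ?thesis using dl_le[OF assms(2)] dl_le1 dl_pos
      by (smt (verit) mult_left_le)
  next
    case (Suc j)
    have "L s t * mpow L (Suc j) t t \<le> (\<Sum>q\<in>UNIV. L s q * mpow L (Suc j) q t)"
      by (rule member_le_sum[where f="\<lambda>q. L s q * mpow L (Suc j) q t"])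
        (auto simp del: mpow.simps intro!: mult_nonneg_nonneg nonneg mp_nonneg)
    also have "\<dots> = mpow L k s t" using k Suc by (simp add: mmul_def)
    finally have 1: "L s t * mpow L (Suc j) t t \<le> mpow L k s t" .
    have "dl \<le> mpow L (Suc j) t t" using rec_lower assms rec_self by blast
    then have "dl * dl \<le> L s t * mpow L (Suc j) t t"
      using dl_le[OF assms(2)] dl_pos by (intro mult_mono) auto
    with 1 show ?thesis by linarith
  qed
qed

lemma iter_limit:
  "\<exists>r Lim. strict_mono r \<and> (\<forall>s t. (\<lambda>j. mpow L (r j) s t) \<longlonglongrightarrow> Lim s t)
     \<and> (\<forall>s t. lw_iter u s t \<longleftrightarrow> Lim s t > 0)"
proof -
  define f :: "nat \<Rightarrow> real ^ ('q \<times> 'q)" where "f = (\<lambda>k. \<chi> p. mpow L k (fst p) (snd p))"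
  have "bounded (range f)"
    unfolding bounded_iff
  proof (intro exI ballI)
    fix x assume "x \<in> range f"
    then obtain k where x: "x = f k" by blast
    have "norm x \<le> (\<Sum>i\<in>UNIV. \<bar>x $ i\<bar>)" by (rule norm_le_l1_cart)
    also have "\<dots> \<le> (\<Sum>i\<in>(UNIV::('q\<times>'q) set). 1)"
      using x by (intro sum_mono) (auto simp: f_def mp_nonneg mp_le1)
    finally show "norm x \<le> real CARD('q \<times> 'q)" by simp
  qed
  then obtain l r where r: "strict_mono r" and lim: "(f \<circ> r) \<longlonglongrightarrow> l"
    using bounded_imp_convergent_subsequence by blast
  define Lim where "Lim = (\<lambda>s t. l $ (s, t))"
  have conv: "(\<lambda>j. mpow L (r j) s t) \<longlonglongrightarrow> Lim s t" for s t
    using tendsto_vec_nth[OF lim, of "(s,t)"] by (simp add: f_def Lim_def comp_def)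
  have ge1: "\<exists>N. \<forall>j\<ge>N. r j \<ge> 1" using seq_suble[OF r] by (metis le_trans)
  have "lw_iter u s t \<longleftrightarrow> Lim s t > 0" for s t
  proof
    assume "lw_iter u s t"
    then have "u s t" "lw_recurrent u t" unfolding lw_iter_def by auto
    then have "dl * dl \<le> Lim s t"
      using ge1 rec_lower2 by (intro LIMSEQ_le_const[OF conv]) blast
    then show "Lim s t > 0" using dl_pos
      by (smt (verit) mult_pos_pos)
  next
    assume pos: "Lim s t > 0"
    show "lw_iter u s t"
      unfolding lw_iter_def
    proof
      show "u s t"
      proof (rule ccontr)
        assume nu: "\<not> u s t"
        have "\<exists>N. \<forall>j\<ge>N. mpow L (r j) s t \<le> 0"
        proof -
          obtain N where N: "\<forall>j\<ge>N. r j \<ge> 1" using ge1 by blast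
          have "mpow L (r j) s t \<le> 0" if jN: "j \<ge> N" for j
          proof -
            obtain m where "r j = Suc m" using N jN by (cases "r j") auto
            then show ?thesis using mp_supp nu by (metis not_less)
          qed
          then show ?thesis by blast
        qed
        then have "Lim s t \<le> 0" by (intro LIMSEQ_le_const2[OF conv])
        then show False using pos by simp
      qed
      show "lw_recurrent u t"
      proof (rule ccontr)
        assume "\<not> lw_recurrent u t"
        then have "(\<lambda>j. mpow L (r j) s t) \<longlonglongrightarrow> 0"
          using LIMSEQ_subseq_LIMSEQ[OF trans_tendsto r] by (simp add: comp_def)
        then have "Lim s t = 0" using conv LIMSEQ_unique by blast
        then show False using pos by simp
      qed
    qed
  qed
  then show ?thesis using r conv by blast
qed

end


lemma reifies_lim:
  assumes "reifies Delta us u"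
  shows "(\<lambda>n. word_prob Delta (us n) s t) \<longlonglongrightarrow> lim (\<lambda>n. word_prob Delta (us n) s t)"
  using assms unfolding reifies_def by (simp add: convergent_LIMSEQ_iff)

lemma reifiesI:
  assumes "\<And>s t. (\<lambda>n. word_prob Delta (us n) s t) \<longlonglongrightarrow> LL s t"
    and "\<And>s t. u s t \<longleftrightarrow> LL s t > 0"
  shows "reifies Delta us u"
  unfolding reifies_def using assms limI convergentI by metis

lemma lim_nonneg:
  assumes "reifies Delta us u"
  shows "lim (\<lambda>n. word_prob Delta (us n) s t) \<ge> 0"
  using reifies_lim[OF assms] by (rule LIMSEQ_le_const) (auto simp: word_prob_nonneg)

lemma lim_rows:
  fixes Delta :: "'q::finite \<Rightarrow> 'a \<Rightarrow> 'q pmf"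
  assumes "reifies Delta us u"
  shows "(\<Sum>t\<in>UNIV. lim (\<lambda>n. word_prob Delta (us n) s t)) = 1"
proof -
  have "(\<lambda>n. \<Sum>t\<in>UNIV. word_prob Delta (us n) s t) \<longlonglongrightarrow> (\<Sum>t\<in>UNIV. lim (\<lambda>n. word_prob Delta (us n) s t))"
    by (intro tendsto_sum reifies_lim[OF assms])
  then have "(\<lambda>n. 1::real) \<longlonglongrightarrow> (\<Sum>t\<in>UNIV. lim (\<lambda>n. word_prob Delta (us n) s t))"
    by (simp add: word_prob_rows)
  then show ?thesis using LIMSEQ_unique tendsto_const by metis
qed

lemma close_tendsto:
  fixes a b :: "nat \<Rightarrow> real"
  assumes "\<And>j. \<bar>a j - b j\<bar> < inverse (real (Suc j))" "b \<longlonglongrightarrow> c"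
  shows "a \<longlonglongrightarrow> c"
proof -
  have "(\<lambda>j. a j - b j) \<longlonglongrightarrow> 0"
  proof (rule Lim_null_comparison[OF _ LIMSEQ_inverse_real_of_nat])
    show "\<forall>\<^sub>F j in sequentially. norm (a j - b j) \<le> inverse (real (Suc j))"
      by (intro always_eventually allI) (metis assms(1) less_imp_le real_norm_def)
  qed
  from tendsto_add[OF this assms(2)] show ?thesis by simp
qed

lemma pos_mult_iff: "0 \<le> (a::real) \<Longrightarrow> 0 \<le> b \<Longrightarrow> (0 < a * b \<longleftrightarrow> 0 < a \<and> 0 < b)"
  by (auto simp: zero_less_mult_iff)

theorem theorem2p10:
  fixes Delta :: "'q::finite \<Rightarrow> 'a::finite \<Rightarrow> 'q pmf"
  assumes "u \<in> markov_monoid Delta"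
  shows "\<exists>us. reifies Delta us u"
  using assms
proof (induction rule: markov_monoid.induct)
  case (letter a)
  show ?case
    by (rule exI[of _ "\<lambda>n. [a]"], rule reifiesI[where LL="\<lambda>s t. pmf (Delta s a) t"])
      (auto simp: word_prob_single letter_lw_def simp del: word_prob.simps)
next
  case one
  show ?case
    by (rule exI[of _ "\<lambda>n. []"], rule reifiesI[where LL="\<lambda>s t. if s = t then 1 else 0"])
      (auto simp: lw_one_def)
next
  case (concat u v)
  obtain us vs where us: "reifies Delta us u" and vs: "reifies Delta vs v"
    using concat.IH by blast
  define L1 where "L1 = (\<lambda>s t. lim (\<lambda>n. word_prob Delta (us n) s t))"
  define L2 where "L2 = (\<lambda>s t. lim (\<lambda>n. word_prob Delta (vs n) s t))"
  have t1: "\<And>s t. (\<lambda>n. word_prob Delta (us n) s t) \<longlonglongrightarrow> L1 s t"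
    unfolding L1_def using reifies_lim[OF us] .
  have t2: "\<And>s t. (\<lambda>n. word_prob Delta (vs n) s t) \<longlonglongrightarrow> L2 s t"
    unfolding L2_def using reifies_lim[OF vs] .
  have n1: "\<And>s t. L1 s t \<ge> 0" unfolding L1_def using lim_nonneg[OF us] .
  have n2: "\<And>s t. L2 s t \<ge> 0" unfolding L2_def using lim_nonneg[OF vs] .
  have s1: "\<And>s t. u s t \<longleftrightarrow> L1 s t > 0" using us unfolding reifies_def L1_def by blast
  have s2: "\<And>s t. v s t \<longleftrightarrow> L2 s t > 0" using vs unfolding reifies_def L2_def by blast
  show ?case
  proof (rule exI[of _ "\<lambda>n. us n @ vs n"], rule reifiesI[where LL="mmul L1 L2"])
    fix s t
    show "(\<lambda>n. word_prob Delta (us n @ vs n) s t) \<longlonglongrightarrow> mmul L1 L2 s t"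
      unfolding word_prob_append mmul_def by (intro tendsto_sum tendsto_mult t1 t2)
    have nn: "\<And>q. 0 \<le> L1 s q * L2 q t" using n1 n2 by simp
    have "mmul L1 L2 s t > 0 \<longleftrightarrow> (\<exists>q. L1 s q * L2 q t > 0)"
    proof
      assume "mmul L1 L2 s t > 0" then show "\<exists>q. L1 s q * L2 q t > 0"
        using pos_sum_ex unfolding mmul_def by blast
    next
      assume "\<exists>q. L1 s q * L2 q t > 0"
      then obtain q where "L1 s q * L2 q t > 0" by blast
      moreover have "L1 s q * L2 q t \<le> mmul L1 L2 s t"
        unfolding mmul_def by (rule member_le_sum[where f="\<lambda>q. L1 s q * L2 q t"]) (use nn in auto)
      ultimately show "mmul L1 L2 s t > 0" by linarith
    qed
    also have "\<dots> \<longleftrightarrow> (\<exists>q. u s q \<and> v q t)"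
      using s1 s2 n1 n2 pos_mult_iff by simp
    finally show "lw_concat u v s t \<longleftrightarrow> mmul L1 L2 s t > 0"
      unfolding lw_concat_def by simp
  qed
next
  case (iter u)
  obtain us where us: "reifies Delta us u" using iter.IH by blast
  define L where "L = (\<lambda>s t. lim (\<lambda>n. word_prob Delta (us n) s t))"
  have tL: "\<And>s t. (\<lambda>n. word_prob Delta (us n) s t) \<longlonglongrightarrow> L s t"
    unfolding L_def using reifies_lim[OF us] .
  have nL: "\<And>s t. L s t \<ge> 0" unfolding L_def using lim_nonneg[OF us] .
  have rL: "\<And>s. (\<Sum>t\<in>UNIV. L s t) = 1" unfolding L_def using lim_rows[OF us] .
  have sL: "\<And>s t. u s t \<longleftrightarrow> L s t > 0" using us unfolding reifies_def L_def by blast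
  obtain r LL where r: "strict_mono r" and conv: "\<forall>s t. (\<lambda>j. mpow L (r j) s t) \<longlonglongrightarrow> LL s t"
    and pos: "\<forall>s t. lw_iter u s t \<longleftrightarrow> LL s t > 0"
    using iter_limit[OF nL rL sL iter.hyps(2)] by blast
  have "\<exists>N. \<forall>s t. \<bar>mpow (word_prob Delta (us N)) (r j) s t - mpow L (r j) s t\<bar> < inverse (real (Suc j))" for j
  proof -
    have "\<forall>\<^sub>F n in sequentially. \<forall>s t. \<bar>mpow (word_prob Delta (us n)) (r j) s t - mpow L (r j) s t\<bar> < inverse (real (Suc j))"
    proof (intro eventually_all_finite)
      fix s t
      have tj: "(\<lambda>n. mpow (word_prob Delta (us n)) (r j) s t) \<longlonglongrightarrow> mpow L (r j) s t"
        by (rule mpow_tendsto[OF tL])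
      show "\<forall>\<^sub>F n in sequentially. \<bar>mpow (word_prob Delta (us n)) (r j) s t - mpow L (r j) s t\<bar> < inverse (real (Suc j))"
        using tendstoD[OF tj, of "inverse (real (Suc j))"] by (simp add: dist_real_def del: of_nat_Suc)
    qed
    then show ?thesis unfolding eventually_sequentially by blast
  qed
  then have "\<forall>j. \<exists>N. \<forall>s t. \<bar>mpow (word_prob Delta (us N)) (r j) s t - mpow L (r j) s t\<bar> < inverse (real (Suc j))"
    by blast
  then have "\<exists>N. \<forall>j. \<forall>s t. \<bar>mpow (word_prob Delta (us (N j))) (r j) s t - mpow L (r j) s t\<bar> < inverse (real (Suc j))"
    by (rule choice)
  then obtain N where N: "\<And>j s t. \<bar>mpow (word_prob Delta (us (N j))) (r j) s t - mpow L (r j) s t\<bar> < inverse (real (Suc j))"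
    by blast
  show ?case
  proof (rule exI[of _ "\<lambda>j. concat (replicate (r j) (us (N j)))"], rule reifiesI[where LL=LL])
    fix s t
    show "(\<lambda>j. word_prob Delta (concat (replicate (r j) (us (N j)))) s t) \<longlonglongrightarrow> LL s t"
      unfolding word_prob_pow
      by (rule close_tendsto[where b="\<lambda>j. mpow L (r j) s t", OF N]) (use conv in blast)
    show "lw_iter u s t \<longleftrightarrow> LL s t > 0" using pos by blast
  qed
qed

end
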